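(* Let $\delta:\mathcal{B}\to B$ be any derivation with Fourier components $\delta_n$. Then for every $b\in\mathcal{B}$ and every finitely supported $x\in c_{00}(\mathbb{Z})\subseteq\ell^2(\mathbb{Z})$, the series $\sum_{n\in\mathbb{Z}}\delta_n(b)x$ converges in $\ell^2(\mathbb{Z})$ and equals $\delta(b)x$.
   Context: Setup: $G$ is an infinite compact (Hausdorff) abelian group, written additively, and $x_1\in G$ generates a dense cyclic subgroup; $x_n=nx_1$. $\widehat G$ is the group of continuous characters. Let $H=\ell^2(\mathbb{Z})$ with canonical basis $\{E_l\}$; $VE_l=E_{l+1}$, $M_fE_l=f(x_l)E_l$, $\mathbb{L}E_l=lE_l$. $B=C^*(V,M_f:f\in C(G))$, $\mathcal{B}$ is the $*$-subalgebra generated by $V,V^{-1},M_\chi$ ($\chi\in\widehat G$). For $\theta\in\mathbb{R}$, $\rho_\theta(b)=e^{i\theta\mathbb{L}}be^{-i\theta\mathbb{L}}$. The $n$-th Fourier component of a derivation $\delta:\mathcal B\to B$ is $\delta_n(b)=\frac{1}{2\pi}\int_0^{2\pi}e^{in\theta}\rho_\theta^{-1}\big(\delta(\rho_\theta(b))\big)\,d\theta$. *)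

theory Defs
  imports "HOL-Analysis.Analysis" "HOL-Library.Function_Algebras"
begin

definition zmult :: "int \<Rightarrow> 'g::ab_group_add \<Rightarrow> 'g" where
  "zmult n x = (if 0 \<le> n then (((+) x) ^^ nat n) 0 else - ((((+) x) ^^ nat (- n)) 0))"

definition infinite_compact_abelian_group :: "'g::{t2_space, ab_group_add} itself \<Rightarrow> bool" where
  "infinite_compact_abelian_group _ \<longleftrightarrow>
     compact (UNIV :: 'g set) \<and> infinite (UNIV :: 'g set) \<and>
     continuous_on UNIV (\<lambda>p :: 'g \<times> 'g. fst p + snd p) \<and>
     continuous_on UNIV (uminus :: 'g \<Rightarrow> 'g)"

definition character :: "('g::{topological_space, ab_group_add} \<Rightarrow> complex) \<Rightarrow> bool" where
  "character ch \<longleftrightarrow> continuous_on UNIV ch \<and> (\<forall>x. cmod (ch x) = 1) \<and>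
     (\<forall>x y. ch (x + y) = ch x * ch y)"

text \<open>A (bounded) operator T is represented by its matrix: T i j = <T E_j, E_i>.\<close>
type_synonym mat = "int \<Rightarrow> int \<Rightarrow> complex"
type_synonym vec = "int \<Rightarrow> complex"

definition ell2 :: "vec \<Rightarrow> bool" where
  "ell2 x \<longleftrightarrow> (\<lambda>n. (cmod (x n))\<^sup>2) summable_on UNIV"

definition l2norm :: "vec \<Rightarrow> real" where
  "l2norm x = sqrt (infsum (\<lambda>n. (cmod (x n))\<^sup>2) UNIV)"

definition fin_supp :: "vec \<Rightarrow> bool" where
  "fin_supp x \<longleftrightarrow> finite {n. x n \<noteq> 0}"

definition mat_app :: "mat \<Rightarrow> vec \<Rightarrow> vec" where
  "mat_app A x = (\<lambda>i. infsum (\<lambda>j. A i j * x j) UNIV)"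

definition mat_mult :: "mat \<Rightarrow> mat \<Rightarrow> mat" where
  "mat_mult A B = (\<lambda>i k. infsum (\<lambda>j. A i j * B j k) UNIV)"

definition mat_adj :: "mat \<Rightarrow> mat" where
  "mat_adj A = (\<lambda>i j. cnj (A j i))"

definition mat_scale :: "complex \<Rightarrow> mat \<Rightarrow> mat" where
  "mat_scale c A = (\<lambda>i j. c * A i j)"

definition diag :: "vec \<Rightarrow> mat" where
  "diag d = (\<lambda>i j. if i = j then d j else 0)"

text \<open>Boundedness, tested on the dense subspace c_00(Z) of finitely supported vectors.\<close>
definition bounded_op :: "mat \<Rightarrow> bool" where
  "bounded_op A \<longleftrightarrow> (\<exists>C. \<forall>x. fin_supp x \<longrightarrow> ell2 (mat_app A x) \<and>
       l2norm (mat_app A x) \<le> C * l2norm x)"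

definition opnorm :: "mat \<Rightarrow> real" where
  "opnorm A = (SUP x\<in>{x. fin_supp x \<and> l2norm x \<le> 1}. l2norm (mat_app A x))"

inductive_set star_alg :: "mat set \<Rightarrow> mat set" for S :: "mat set" where
  gen: "A \<in> S \<Longrightarrow> A \<in> star_alg S"
| add: "A \<in> star_alg S \<Longrightarrow> B \<in> star_alg S \<Longrightarrow> A + B \<in> star_alg S"
| scale: "A \<in> star_alg S \<Longrightarrow> mat_scale c A \<in> star_alg S"
| mult: "A \<in> star_alg S \<Longrightarrow> B \<in> star_alg S \<Longrightarrow> mat_mult A B \<in> star_alg S"
| adj: "A \<in> star_alg S \<Longrightarrow> mat_adj A \<in> star_alg S"

definition cstar_alg :: "mat set \<Rightarrow> mat set" where
  "cstar_alg S = {A. bounded_op A \<and> (\<forall>e>0. \<exists>P\<in>star_alg S. opnorm (A - P) < e)}"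

definition shiftV :: mat where
  "shiftV = (\<lambda>i j. if i = j + 1 then 1 else 0)"

definition shiftVinv :: mat where
  "shiftVinv = (\<lambda>i j. if i = j - 1 then 1 else 0)"

definition multM :: "'g::ab_group_add \<Rightarrow> ('g \<Rightarrow> complex) \<Rightarrow> mat" where
  "multM x1 f = diag (\<lambda>l. f (zmult l x1))"

definition algB :: "'g::{topological_space, ab_group_add} \<Rightarrow> mat set" where
  "algB x1 = cstar_alg ({shiftV} \<union> {multM x1 f | f. continuous_on UNIV f})"

definition algBB :: "'g::{topological_space, ab_group_add} \<Rightarrow> mat set" where
  "algBB x1 = star_alg ({shiftV, shiftVinv} \<union> {multM x1 ch | ch. character ch})"

text \<open>e^{i theta L}, with L E_l = l E_l, and rho_theta(b) = e^{i theta L} b e^{-i theta L}\<close>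
definition expL :: "real \<Rightarrow> mat" where
  "expL \<theta> = diag (\<lambda>l. exp (\<i> * complex_of_real (\<theta> * real_of_int l)))"

definition rho :: "real \<Rightarrow> mat \<Rightarrow> mat" where
  "rho \<theta> A = mat_mult (mat_mult (expL \<theta>) A) (expL (- \<theta>))"

definition is_derivation :: "'g::{topological_space, ab_group_add} \<Rightarrow> (mat \<Rightarrow> mat) \<Rightarrow> bool" where
  "is_derivation x1 \<delta> \<longleftrightarrow>
     (\<forall>a\<in>algBB x1. \<delta> a \<in> algB x1) \<and>
     (\<forall>a\<in>algBB x1. \<forall>b\<in>algBB x1. \<delta> (a + b) = \<delta> a + \<delta> b) \<and>
     (\<forall>a\<in>algBB x1. \<forall>c. \<delta> (mat_scale c a) = mat_scale c (\<delta> a)) \<and>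
     (\<forall>a\<in>algBB x1. \<forall>b\<in>algBB x1. \<delta> (mat_mult a b) = mat_mult (\<delta> a) b + mat_mult a (\<delta> b))"

text \<open>n-th Fourier component; the operator-valued integral is given by its matrix
  entries (entrywise integrals), rho_theta^{-1} = rho_{-theta}.\<close>
definition fourier_comp :: "(mat \<Rightarrow> mat) \<Rightarrow> int \<Rightarrow> mat \<Rightarrow> mat" where
  "fourier_comp \<delta> n b = (\<lambda>i j. complex_of_real (1 / (2 * pi)) *
      integral {0..2*pi} (\<lambda>\<theta>. exp (\<i> * complex_of_real (real_of_int n * \<theta>)) *
                                rho (- \<theta>) (\<delta> (rho \<theta> b)) i j))"

end

theory Submission
  imports Defs
begin

lemma infsum_single:
  fixes f :: "int \<Rightarrow> complex"
  assumes "\<And>j. j \<noteq> a \<Longrightarrow> f j = 0"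
  shows "infsum f UNIV = f a"
proof -
  have "infsum f UNIV = infsum f {a}"
    by (rule infsum_cong_neutral) (use assms in auto)
  then show ?thesis by simp
qed

lemma infsum_fin:
  fixes f :: "int \<Rightarrow> complex"
  assumes "finite R" "\<And>j. j \<notin> R \<Longrightarrow> f j = 0"
  shows "infsum f UNIV = sum f R"
proof -
  have "infsum f UNIV = infsum f R"
    by (rule infsum_cong_neutral) (use assms in auto)
  then show ?thesis using assms by simp
qed

lemma mat_mult_diag_left: "mat_mult (diag d) A i k = d i * A i k"
  unfolding mat_mult_def diag_def by (subst infsum_single[where a=i]) auto

lemma mat_mult_diag_right: "mat_mult A (diag d) i k = A i k * d k"
  unfolding mat_mult_def diag_def by (subst infsum_single[where a=k]) auto

lemma rho_entry: "rho t A i j = exp (\<i> * complex_of_real (t * real_of_int (i - j))) * A i j"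
proof -
  have "rho t A i j = exp (\<i> * complex_of_real (t * real_of_int i)) * A i j * exp (\<i> * complex_of_real (- t * real_of_int j))"
    unfolding rho_def expL_def by (simp add: mat_mult_diag_left mat_mult_diag_right)
  also have "\<dots> = exp (\<i> * complex_of_real (t * real_of_int i) + \<i> * complex_of_real (- t * real_of_int j)) * A i j"
    by (simp only: exp_add) (simp add: ac_simps)
  also have "\<i> * complex_of_real (t * real_of_int i) + \<i> * complex_of_real (- t * real_of_int j) = \<i> * complex_of_real (t * real_of_int (i - j))"
    by (simp add: algebra_simps)
  finally show ?thesis .
qed

definition hom :: "int \<Rightarrow> mat \<Rightarrow> bool" where
  "hom k A \<longleftrightarrow> (\<forall>i j. i - j \<noteq> k \<longrightarrow> A i j = 0)"

definition msum :: "(int \<times> mat) list \<Rightarrow> mat" where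
  "msum L = (\<lambda>i j. sum_list (map (\<lambda>p. snd p i j) L))"

lemma msum_Nil: "msum [] = 0" by (simp add: msum_def fun_eq_iff)
lemma msum_Cons: "msum (p # L) = snd p + msum L" by (simp add: msum_def fun_eq_iff)
lemma msum_append: "msum (L1 @ L2) = msum L1 + msum L2" by (simp add: msum_def fun_eq_iff)

lemma hom_mult_entry:
  assumes "hom k A" shows "mat_mult A B i l = A i (i - k) * B (i - k) l"
  unfolding mat_mult_def by (rule infsum_single) (use assms in \<open>auto simp: hom_def\<close>)

lemma hom_mult: "hom k1 A \<Longrightarrow> hom k2 B \<Longrightarrow> hom (k1 + k2) (mat_mult A B)"
  unfolding hom_def by (auto simp: hom_mult_entry[unfolded hom_def])

lemma sum_list_swap_sum:
  "(\<Sum>j\<in>R. sum_list (map (f j) L)) = sum_list (map (\<lambda>p. \<Sum>j\<in>R. f j p) L)"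
  by (induction L) (auto simp: sum.distrib)

lemma sum_single_point:
  assumes "finite R" "a \<in> R" "\<And>j. j \<in> R \<Longrightarrow> j \<noteq> a \<Longrightarrow> f j = 0"
  shows "sum f R = f a"
  by (metis (mono_tags, lifting) assms sum.remove sum.neutral DiffE insertCI add.right_neutral)

lemma sum_list_concat_map:
  "sum_list (map h (concat (map (\<lambda>p. map (g p) L2) L1))) = sum_list (map (\<lambda>p. sum_list (map (\<lambda>q. h (g p q)) L2)) L1)"
  by (induction L1) (auto simp: comp_def)

lemma msum_mult:
  assumes "\<forall>p\<in>set L1. hom (fst p) (snd p)"
  shows "mat_mult (msum L1) (msum L2) =
    msum (concat (map (\<lambda>p. map (\<lambda>q. (fst p + fst q, mat_mult (snd p) (snd q))) L2) L1))"
proof (intro ext)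
  fix i l
  define R where "R = (\<lambda>p. i - fst p) ` set L1"
  have fR: "finite R" unfolding R_def by simp
  have zero: "msum L1 i j = 0" if "j \<notin> R" for j
  proof -
    have "\<forall>p\<in>set L1. snd p i j = 0"
      using assms that unfolding R_def hom_def by force
    then show ?thesis unfolding msum_def
      by (metis (no_types, lifting) map_eq_conv map_replicate_const sum_list_replicate mult_zero_right length_map)
  qed
  have "mat_mult (msum L1) (msum L2) i l = (\<Sum>j\<in>R. msum L1 i j * msum L2 j l)"
    unfolding mat_mult_def by (rule infsum_fin[OF fR]) (simp add: zero)
  also have "\<dots> = (\<Sum>j\<in>R. sum_list (map (\<lambda>p. snd p i j * msum L2 j l) L1))"
    unfolding msum_def[of L1] by (simp add: sum_list_mult_const)
  also have "\<dots> = sum_list (map (\<lambda>p. \<Sum>j\<in>R. snd p i j * msum L2 j l) L1)"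
    by (rule sum_list_swap_sum)
  also have "\<dots> = sum_list (map (\<lambda>p. snd p i (i - fst p) * msum L2 (i - fst p) l) L1)"
  proof (rule arg_cong[where f=sum_list], rule map_cong[OF refl])
    fix p assume p: "p \<in> set L1"
    show "(\<Sum>j\<in>R. snd p i j * msum L2 j l) = snd p i (i - fst p) * msum L2 (i - fst p) l"
      by (rule sum_single_point[OF fR]) (use p assms in \<open>auto simp: R_def hom_def\<close>)
  qed
  also have "\<dots> = sum_list (map (\<lambda>p. sum_list (map (\<lambda>q. mat_mult (snd p) (snd q) i l) L2)) L1)"
  proof (rule arg_cong[where f=sum_list], rule map_cong[OF refl])
    fix p assume p: "p \<in> set L1"
    then have h: "hom (fst p) (snd p)" using assms by auto
    show "snd p i (i - fst p) * msum L2 (i - fst p) l = sum_list (map (\<lambda>q. mat_mult (snd p) (snd q) i l) L2)"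
      unfolding msum_def hom_mult_entry[OF h] by (simp add: sum_list_const_mult)
  qed
  also have "\<dots> = msum (concat (map (\<lambda>p. map (\<lambda>q. (fst p + fst q, mat_mult (snd p) (snd q))) L2) L1)) i l"
    unfolding msum_def by (simp add: sum_list_concat_map)
  finally show "mat_mult (msum L1) (msum L2) i l = msum (concat (map (\<lambda>p. map (\<lambda>q. (fst p + fst q, mat_mult (snd p) (snd q))) L2) L1)) i l" .
qed

lemma hom_scale: "hom k A \<Longrightarrow> hom k (mat_scale c A)"
  by (simp add: hom_def mat_scale_def)

lemma hom_adj: "hom k A \<Longrightarrow> hom (- k) (mat_adj A)"
  by (auto simp: hom_def mat_adj_def)

lemma cnj_sum_list: "cnj (sum_list (map f L)) = sum_list (map (\<lambda>p. cnj (f p)) L)"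
  by (induction L) auto

lemma star_alg_dec:
  assumes gens: "\<forall>A\<in>S. \<exists>k. hom k A" and b: "b \<in> star_alg S"
  shows "\<exists>L. (\<forall>p\<in>set L. snd p \<in> star_alg S \<and> hom (fst p) (snd p)) \<and> b = msum L"
  using b
proof (induction rule: star_alg.induct)
  case (gen A)
  then obtain k where "hom k A" using gens by auto
  then show ?case using gen
    by (intro exI[of _ "[(k, A)]"]) (auto simp: msum_Cons msum_Nil star_alg.gen)
next
  case (add A B)
  then obtain L1 L2 where "(\<forall>p\<in>set L1. snd p \<in> star_alg S \<and> hom (fst p) (snd p)) \<and> A = msum L1"
     "(\<forall>p\<in>set L2. snd p \<in> star_alg S \<and> hom (fst p) (snd p)) \<and> B = msum L2" by blast
  then show ?case by (intro exI[of _ "L1 @ L2"]) (auto simp: msum_append)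
next
  case (scale A c)
  then obtain L where L: "(\<forall>p\<in>set L. snd p \<in> star_alg S \<and> hom (fst p) (snd p)) \<and> A = msum L" by blast
  show ?case
  proof (intro exI[of _ "map (\<lambda>p. (fst p, mat_scale c (snd p))) L"], rule conjI)
    show "\<forall>p \<in> set (map (\<lambda>p. (fst p, mat_scale c (snd p))) L). snd p \<in> star_alg S \<and> hom (fst p) (snd p)"
      using L by (force intro: star_alg.scale hom_scale)
  next
    show "mat_scale c A = msum (map (\<lambda>p. (fst p, mat_scale c (snd p))) L)"
      using L by (auto simp: msum_def mat_scale_def fun_eq_iff sum_list_const_mult comp_def)
  qed
next
  case (mult A B)
  then obtain L1 L2 where L1: "(\<forall>p\<in>set L1. snd p \<in> star_alg S \<and> hom (fst p) (snd p)) \<and> A = msum L1"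
     and L2: "(\<forall>p\<in>set L2. snd p \<in> star_alg S \<and> hom (fst p) (snd p)) \<and> B = msum L2" by blast
  show ?case
  proof (intro exI[of _ "concat (map (\<lambda>p. map (\<lambda>q. (fst p + fst q, mat_mult (snd p) (snd q))) L2) L1)"], rule conjI)
    show "\<forall>r \<in> set (concat (map (\<lambda>p. map (\<lambda>q. (fst p + fst q, mat_mult (snd p) (snd q))) L2) L1)). snd r \<in> star_alg S \<and> hom (fst r) (snd r)"
      using L1 L2 by (auto intro: star_alg.mult hom_mult)
  next
    show "mat_mult A B = msum (concat (map (\<lambda>p. map (\<lambda>q. (fst p + fst q, mat_mult (snd p) (snd q))) L2) L1))"
      using L1 L2 msum_mult by blast
  qed
next
  case (adj A)
  then obtain L where L: "(\<forall>p\<in>set L. snd p \<in> star_alg S \<and> hom (fst p) (snd p)) \<and> A = msum L" by blast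
  show ?case
  proof (intro exI[of _ "map (\<lambda>p. (- fst p, mat_adj (snd p))) L"], rule conjI)
    show "\<forall>p \<in> set (map (\<lambda>p. (- fst p, mat_adj (snd p))) L). snd p \<in> star_alg S \<and> hom (fst p) (snd p)"
      using L by (force intro: star_alg.adj hom_adj)
  next
    show "mat_adj A = msum (map (\<lambda>p. (- fst p, mat_adj (snd p))) L)"
      using L by (auto simp: msum_def mat_adj_def fun_eq_iff cnj_sum_list comp_def)
  qed
qed

lemma algBB_gens_hom:
  "\<forall>A\<in>({shiftV, shiftVinv} \<union> {multM x1 ch | ch. character ch}). \<exists>k. hom k A"
proof -
  have "hom 1 shiftV" by (auto simp: hom_def shiftV_def)
  moreover have "hom (-1) shiftVinv" by (auto simp: hom_def shiftVinv_def)
  moreover have "hom 0 (multM x1 f)" for f by (auto simp: hom_def multM_def diag_def)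
  ultimately show ?thesis by blast
qed

lemma exp_int_has_integral:
  "((\<lambda>t. exp (\<i> * complex_of_real (real_of_int m * t))) has_integral (if m = 0 then complex_of_real (2*pi) else 0)) {0..2*pi}"
proof (cases "m = 0")
  case True
  note has_integral_const_real[of "1::complex" 0 "2*pi"]
  then show ?thesis using True by (simp add: scaleR_conv_of_real)
next
  case False
  define a where "a = \<i> * of_int m"
  have a0: "a \<noteq> 0" using False by (simp add: a_def)
  have eq: "exp (\<i> * complex_of_real (real_of_int m * t)) = exp (a * complex_of_real t)" for t
    by (simp add: a_def mult.assoc)
  have "\<And>t. t \<in> {0..2*pi} \<Longrightarrow> ((\<lambda>x. exp (a * x) / a) has_vector_derivative exp (a * t)) (at t within {0..2*pi})"
    using a0
    by (intro derivative_eq_intros has_complex_derivative_imp_has_vector_derivative [unfolded o_def] | simp)+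
  then have "((\<lambda>t. exp(a * of_real t)) has_integral exp(a * complex_of_real (2*pi))/a - exp(a * of_real 0)/a) {0..2*pi}"
    by (intro fundamental_theorem_of_calculus) auto
  moreover have "exp(a * complex_of_real (2*pi)) = 1"
  proof -
    have "exp(a * complex_of_real (2*pi)) = exp((2 * of_int m * pi) * \<i>)"
      by (simp add: a_def algebra_simps)
    also have "\<dots> = 1" by (rule exp_integer_2pi) simp
    finally show ?thesis .
  qed
  ultimately have "((\<lambda>t. exp(a * of_real t)) has_integral 0) {0..2*pi}" by simp
  then show ?thesis using False unfolding eq by simp
qed

lemma zero_algBB: "0 \<in> algBB x1"
proof -
  have "shiftV \<in> algBB x1" unfolding algBB_def by (auto intro: star_alg.gen)
  then have "mat_scale 0 shiftV \<in> algBB x1" unfolding algBB_def by (rule star_alg.scale)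
  moreover have "mat_scale 0 shiftV = 0" by (simp add: mat_scale_def fun_eq_iff)
  ultimately show ?thesis by metis
qed

lemma msum_algBB: "\<forall>p\<in>set L. snd p \<in> algBB x1 \<Longrightarrow> msum L \<in> algBB x1"
proof (induction L)
  case Nil then show ?case by (simp only: msum_Nil zero_algBB)
next
  case (Cons p L) then have "snd p \<in> algBB x1" "msum L \<in> algBB x1" by auto
  then show ?case unfolding msum_Cons algBB_def by (rule star_alg.add)
qed

lemma delta_zero:
  assumes "is_derivation x1 \<delta>" shows "\<delta> 0 = 0"
proof -
  have "\<delta> (mat_scale 0 0) = mat_scale 0 (\<delta> 0)"
    using assms zero_algBB unfolding is_derivation_def by blast
  moreover have "mat_scale 0 (0::mat) = 0" "mat_scale 0 (\<delta> 0) = 0" by (simp_all add: mat_scale_def fun_eq_iff)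
  ultimately show ?thesis by simp
qed

lemma delta_msum:
  assumes d: "is_derivation x1 \<delta>" and L: "\<forall>p\<in>set L. snd p \<in> algBB x1"
  shows "\<delta> (msum L) = msum (map (\<lambda>p. (fst p, \<delta> (snd p))) L)"
  using L
proof (induction L)
  case Nil then show ?case using delta_zero[OF d] by (simp only: list.map msum_Nil)
next
  case (Cons p L)
  then have "\<delta> (snd p + msum L) = \<delta> (snd p) + \<delta> (msum L)"
    using d msum_algBB[of L x1] unfolding is_derivation_def by auto
  moreover have "\<delta> (msum L) = msum (map (\<lambda>p. (fst p, \<delta> (snd p))) L)" using Cons by auto
  ultimately show ?case by (simp only: msum_Cons list.map snd_conv)
qed

lemma rho_msum:
  assumes "\<forall>p\<in>set L. hom (fst p) (snd p)"
  shows "rho t (msum L) = msum (map (\<lambda>p. (fst p, mat_scale (exp (\<i> * complex_of_real (t * real_of_int (fst p)))) (snd p))) L)"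
proof (intro ext)
  fix i j
  have "rho t (msum L) i j = sum_list (map (\<lambda>p. exp (\<i> * complex_of_real (t * real_of_int (i - j))) * snd p i j) L)"
    unfolding rho_entry msum_def by (simp add: sum_list_const_mult)
  also have "\<dots> = sum_list (map (\<lambda>p. exp (\<i> * complex_of_real (t * real_of_int (fst p))) * snd p i j) L)"
  proof (rule arg_cong[where f=sum_list], rule map_cong[OF refl])
    fix p assume "p \<in> set L"
    then have "hom (fst p) (snd p)" using assms by auto
    then show "exp (\<i> * complex_of_real (t * real_of_int (i - j))) * snd p i j = exp (\<i> * complex_of_real (t * real_of_int (fst p))) * snd p i j"
      unfolding hom_def by (cases "i - j = fst p") auto
  qed
  finally show "rho t (msum L) i j = msum (map (\<lambda>p. (fst p, mat_scale (exp (\<i> * complex_of_real (t * real_of_int (fst p)))) (snd p))) L) i j"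
    by (simp add: msum_def mat_scale_def comp_def)
qed

lemma has_integral_sum_list:
  assumes "\<forall>p\<in>set L. (f p has_integral I p) S"
  shows "((\<lambda>t. sum_list (map (\<lambda>p. f p t) L)) has_integral sum_list (map I L)) S"
  using assms
proof (induction L)
  case Nil then show ?case by (simp add: has_integral_0)
next
  case (Cons p L) then show ?case by (simp add: has_integral_add)
qed

lemma fourier_msum:
  assumes d: "is_derivation x1 \<delta>"
    and L: "\<forall>p\<in>set L. snd p \<in> algBB x1 \<and> hom (fst p) (snd p)"
  shows "fourier_comp \<delta> n (msum L) i j = sum_list (map (\<lambda>p. if n + fst p = i - j then \<delta> (snd p) i j else 0) L)"
proof -
  define e where "e = (\<lambda>t k. exp (\<i> * complex_of_real (t * real_of_int k)))"
  have rhoL: "rho t (msum L) = msum (map (\<lambda>p. (fst p, mat_scale (e t (fst p)) (snd p))) L)" for t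
    unfolding e_def by (rule rho_msum) (use L in auto)
  have inL: "\<forall>p\<in>set (map (\<lambda>p. (fst p, mat_scale (e t (fst p)) (snd p))) L). snd p \<in> algBB x1" for t
    using L unfolding algBB_def by (auto intro: star_alg.scale)
  have dsc: "\<delta> (mat_scale c (snd p)) = mat_scale c (\<delta> (snd p))" if "p \<in> set L" for c p
    using d L that unfolding is_derivation_def by blast
  have X: "\<delta> (rho t (msum L)) = msum (map (\<lambda>p. (fst p, mat_scale (e t (fst p)) (\<delta> (snd p)))) L)" for t
    unfolding rhoL delta_msum[OF d inL] by (simp add: comp_def dsc cong: map_cong)
  have integrand: "exp (\<i> * complex_of_real (real_of_int n * t)) * rho (- t) (\<delta> (rho t (msum L))) i j
      = sum_list (map (\<lambda>p. \<delta> (snd p) i j * exp (\<i> * complex_of_real (real_of_int (n + fst p - (i - j)) * t))) L)" for t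
  proof -
    have "exp (\<i> * complex_of_real (real_of_int n * t)) * rho (- t) (\<delta> (rho t (msum L))) i j
       = sum_list (map (\<lambda>p. \<delta> (snd p) i j * (exp (\<i> * complex_of_real (real_of_int n * t)) * e (-t) (i - j) * e t (fst p))) L)"
      unfolding rho_entry X by (simp add: msum_def mat_scale_def comp_def e_def flip: sum_list_const_mult) (simp add: ac_simps)
    also have "\<dots> = sum_list (map (\<lambda>p. \<delta> (snd p) i j * exp (\<i> * complex_of_real (real_of_int (n + fst p - (i - j)) * t))) L)"
    proof (rule arg_cong[where f=sum_list], rule map_cong[OF refl])
      fix p :: "int \<times> mat"
      have "exp (\<i> * complex_of_real (real_of_int n * t)) * e (-t) (i - j) * e t (fst p)
          = exp (\<i> * complex_of_real (real_of_int n * t) + \<i> * complex_of_real (- t * real_of_int (i - j)) + \<i> * complex_of_real (t * real_of_int (fst p)))"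
        by (simp only: e_def exp_add)
      also have "\<dots> = exp (\<i> * complex_of_real (real_of_int (n + fst p - (i - j)) * t))"
        by (rule arg_cong[where f=exp]) (simp add: algebra_simps)
      finally show "\<delta> (snd p) i j * (exp (\<i> * complex_of_real (real_of_int n * t)) * e (-t) (i - j) * e t (fst p))
          = \<delta> (snd p) i j * exp (\<i> * complex_of_real (real_of_int (n + fst p - (i - j)) * t))" by simp
    qed
    finally show ?thesis .
  qed
  have HI: "((\<lambda>t. exp (\<i> * complex_of_real (real_of_int n * t)) * rho (- t) (\<delta> (rho t (msum L))) i j) has_integral
      sum_list (map (\<lambda>p. \<delta> (snd p) i j * (if n + fst p - (i - j) = 0 then complex_of_real (2*pi) else 0)) L)) {0..2*pi}"
    unfolding integrand
    by (rule has_integral_sum_list) (intro ballI has_integral_mult_right exp_int_has_integral)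
  have "fourier_comp \<delta> n (msum L) i j = complex_of_real (1 / (2 * pi)) *
      sum_list (map (\<lambda>p. \<delta> (snd p) i j * (if n + fst p - (i - j) = 0 then complex_of_real (2*pi) else 0)) L)"
    unfolding fourier_comp_def using integral_unique[OF HI] by simp
  also have "\<dots> = sum_list (map (\<lambda>p. complex_of_real (1 / (2 * pi)) * (\<delta> (snd p) i j * (if n + fst p - (i - j) = 0 then complex_of_real (2*pi) else 0))) L)"
    by (simp only: sum_list_const_mult)
  also have "\<dots> = sum_list (map (\<lambda>p. if n + fst p = i - j then \<delta> (snd p) i j else 0) L)"
  proof (rule arg_cong[where f=sum_list], rule map_cong[OF refl])
    fix p :: "int \<times> mat"
    show "complex_of_real (1 / (2 * pi)) * (\<delta> (snd p) i j * (if n + fst p - (i - j) = 0 then complex_of_real (2*pi) else 0))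
       = (if n + fst p = i - j then \<delta> (snd p) i j else 0)"
      by (auto simp: field_simps)
  qed
  finally show ?thesis .
qed

lemma sum_fun_apply: "(sum f A) x = sum (\<lambda>a. f a x) A"
  by (induction A rule: infinite_finite_induct) auto

lemma summable_on_finsum:
  fixes f :: "'q \<Rightarrow> 'a \<Rightarrow> real"
  assumes "finite Q" "\<forall>q\<in>Q. (\<lambda>i. f q i) summable_on A"
  shows "(\<lambda>i. \<Sum>q\<in>Q. f q i) summable_on A"
  using assms
proof (induction Q rule: finite_induct)
  case empty then show ?case by simp
next
  case (insert q Q) then show ?case by (simp add: summable_on_add)
qed

lemma tail_to_zero:
  fixes g :: "int \<Rightarrow> real" and c :: int
  assumes gs: "g summable_on UNIV" and g0: "\<And>i. g i \<ge> 0"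
  shows "(\<lambda>N::nat. infsum g {i. c + int N < \<bar>i\<bar>}) \<longlonglongrightarrow> 0"
proof (rule LIMSEQ_I)
  fix r :: real assume r: "r > 0"
  obtain F where F: "finite F" "dist (sum g F) (infsum g UNIV) \<le> r / 2"
    using infsum_finite_approximation[OF gs, of "r/2"] r by auto
  define B where "B = Max (insert 0 (abs ` F))"
  have B: "\<bar>i\<bar> \<le> B" if "i \<in> F" for i
    unfolding B_def using F(1) that by (intro Max_ge) auto
  show "\<exists>no. \<forall>N\<ge>no. norm (infsum g {i. c + int N < \<bar>i\<bar>} - 0) < r"
  proof (intro exI[of _ "nat (B - c)"] allI impI)
    fix N assume N: "N \<ge> nat (B - c)"
    define K where "K = {i. \<bar>i\<bar> \<le> c + int N}"
    define T where "T = {i. c + int N < \<bar>i\<bar>}"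
    have fK: "finite K" unfolding K_def
      by (rule finite_subset[of _ "{-(c + int N)..c + int N}"]) auto
    have FK: "F \<subseteq> K" unfolding K_def using B N by force
    have KT: "K \<union> T = UNIV" "K \<inter> T = {}" unfolding K_def T_def by auto
    have "infsum g UNIV = infsum g K + infsum g T"
      using infsum_Un_disjoint[of g K T] KT summable_on_subset_banach[OF gs] by auto
    moreover have "infsum g K = sum g K" using fK by simp
    moreover have "sum g F \<le> sum g K" using fK FK g0 by (intro sum_mono2) auto
    moreover have "infsum g UNIV - sum g F \<le> r / 2" using F(2) by (simp add: dist_real_def abs_if split: if_splits)
    moreover have "infsum g T \<ge> 0" using g0 by (simp add: infsum_nonneg)
    ultimately show "norm (infsum g {i. c + int N < \<bar>i\<bar>} - 0) < r"
      using r unfolding T_def by simp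
  qed
qed

lemma analytic:
  fixes Dq :: "nat \<Rightarrow> mat" and k :: "nat \<Rightarrow> int" and P :: "nat set" and x :: vec
    and F :: "int \<Rightarrow> mat" and Db :: mat
  assumes fP: "finite P" and fx: "fin_supp x"
    and col: "\<forall>q\<in>P. \<forall>j. ell2 (\<lambda>i. Dq q i j)"
    and Fe: "\<And>n i j. F n i j = (\<Sum>q\<in>P. if n + k q = i - j then Dq q i j else 0)"
    and De: "\<And>i j. Db i j = (\<Sum>q\<in>P. Dq q i j)"
  shows "(\<lambda>N::nat. l2norm ((\<Sum>n\<in>{- int N..int N}. mat_app (F n) x) - mat_app Db x)) \<longlonglongrightarrow> 0"
proof -
  define S where "S = {j. x j \<noteq> 0}"
  have fS: "finite S" using fx by (simp add: fin_supp_def S_def)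
  have app: "mat_app A x i = (\<Sum>j\<in>S. A i j * x j)" for A i
    unfolding mat_app_def by (rule infsum_fin[OF fS]) (simp add: S_def)
  define Q where "Q = S \<times> P"
  have fQ: "finite Q" using fS fP by (simp add: Q_def)
  define a where "a = (\<lambda>(N::nat) i (jq::int \<times> nat). if int N < \<bar>i - fst jq - k (snd jq)\<bar> then Dq (snd jq) i (fst jq) * x (fst jq) else 0)"
  define E where "E = (\<lambda>N::nat. (\<Sum>n\<in>{- int N..int N}. mat_app (F n) x) - mat_app Db x)"
  have Eeq: "E N i = - (\<Sum>jq\<in>Q. a N i jq)" for N i
  proof -
    have inner: "(\<Sum>n\<in>{-int N..int N}. F n i j) = (\<Sum>q\<in>P. if \<bar>i - j - k q\<bar> \<le> int N then Dq q i j else 0)" for j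
    proof -
      have "(\<Sum>n\<in>{-int N..int N}. F n i j) = (\<Sum>q\<in>P. \<Sum>n\<in>{-int N..int N}. if n = i - j - k q then Dq q i j else 0)"
        unfolding Fe by (subst sum.swap) (intro sum.cong refl, auto)
      also have "\<dots> = (\<Sum>q\<in>P. if \<bar>i - j - k q\<bar> \<le> int N then Dq q i j else 0)"
        by (intro sum.cong refl) (auto simp: sum.delta)
      finally show ?thesis .
    qed
    have "E N i = (\<Sum>n\<in>{-int N..int N}. \<Sum>j\<in>S. F n i j * x j) - (\<Sum>j\<in>S. Db i j * x j)"
      unfolding E_def by (simp add: sum_fun_apply app)
    also have "(\<Sum>n\<in>{-int N..int N}. \<Sum>j\<in>S. F n i j * x j) = (\<Sum>j\<in>S. (\<Sum>n\<in>{-int N..int N}. F n i j) * x j)"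
      by (subst sum.swap) (simp add: sum_distrib_right)
    also have "\<dots> - (\<Sum>j\<in>S. Db i j * x j) = (\<Sum>j\<in>S. \<Sum>q\<in>P. - a N i (j, q))"
      unfolding inner De sum_subtractf[symmetric]
      by (intro sum.cong refl) (auto simp: a_def sum_distrib_right sum_subtractf[symmetric] intro!: sum.cong)
    also have "\<dots> = - (\<Sum>jq\<in>Q. a N i jq)"
      unfolding Q_def sum.cartesian_product sum_negf by (simp add: case_prod_beta)
    finally show ?thesis .
  qed
  define g where "g = (\<lambda>i. \<Sum>jq\<in>Q. (cmod (Dq (snd jq) i (fst jq) * x (fst jq)))\<^sup>2)"
  define M where "M = (\<Sum>jq\<in>Q. \<bar>fst jq + k (snd jq)\<bar>)"
  define C where "C = (real (card Q))\<^sup>2"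
  have g0: "g i \<ge> 0" for i unfolding g_def by (simp add: sum_nonneg)
  have C0: "C \<ge> 0" unfolding C_def by simp
  have gs: "g summable_on UNIV"
    unfolding g_def
  proof (rule summable_on_finsum[OF fQ], intro ballI)
    fix jq assume "jq \<in> Q"
    then have "snd jq \<in> P" unfolding Q_def by auto
    then have "(\<lambda>i. (cmod (Dq (snd jq) i (fst jq)))\<^sup>2) summable_on UNIV"
      using col unfolding ell2_def by auto
    then have "(\<lambda>i. (cmod (Dq (snd jq) i (fst jq)))\<^sup>2 * (cmod (x (fst jq)))\<^sup>2) summable_on UNIV"
      by (rule summable_on_cmult_left)
    then show "(\<lambda>i. (cmod (Dq (snd jq) i (fst jq) * x (fst jq)))\<^sup>2) summable_on UNIV"
      by (simp add: norm_mult power_mult_distrib)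
  qed
  have bound: "(cmod (E N i))\<^sup>2 \<le> C * (if int N - M < \<bar>i\<bar> then g i else 0)" for N i
  proof (cases "int N - M < \<bar>i\<bar>")
    case False
    have "a N i jq = 0" if "jq \<in> Q" for jq
    proof -
      have "\<bar>fst jq + k (snd jq)\<bar> \<le> M" unfolding M_def
        using fQ that by (intro member_le_sum) auto
      then have "\<bar>i - fst jq - k (snd jq)\<bar> \<le> int N" using False by linarith
      then show ?thesis by (simp add: a_def)
    qed
    then have "E N i = 0" unfolding Eeq by simp
    then show ?thesis using C0 False by simp
  next
    case True
    have each: "cmod (a N i jq) \<le> sqrt (g i)" if "jq \<in> Q" for jq
    proof -
      have "(cmod (Dq (snd jq) i (fst jq) * x (fst jq)))\<^sup>2 \<le> g i"
        unfolding g_def using fQ that by (intro member_le_sum) auto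
      then have "cmod (Dq (snd jq) i (fst jq) * x (fst jq)) \<le> sqrt (g i)"
        by (simp add: real_le_rsqrt)
      then show ?thesis using g0[of i] by (simp add: a_def)
    qed
    have "cmod (E N i) \<le> (\<Sum>jq\<in>Q. cmod (a N i jq))"
      unfolding Eeq norm_minus_cancel by (rule norm_sum)
    also have "\<dots> \<le> (\<Sum>jq\<in>Q. sqrt (g i))" by (rule sum_mono) (rule each)
    also have "\<dots> = real (card Q) * sqrt (g i)" by simp
    finally have "(cmod (E N i))\<^sup>2 \<le> (real (card Q) * sqrt (g i))\<^sup>2"
      by (intro power_mono) auto
    also have "\<dots> = C * g i" unfolding C_def using g0[of i] by (simp add: power_mult_distrib)
    finally show ?thesis using True by simp
  qed
  define T where "T = (\<lambda>N::nat. {i. - M + int N < \<bar>i\<bar>})"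
  have hs: "(\<lambda>i. C * (if int N - M < \<bar>i\<bar> then g i else 0)) summable_on UNIV" for N
  proof -
    have "g summable_on T N" using summable_on_subset_banach[OF gs] by auto
    then have "(\<lambda>i. if int N - M < \<bar>i\<bar> then g i else 0) summable_on UNIV"
      by (subst summable_on_cong_neutral[where T="T N" and g=g]) (auto simp: T_def)
    then show ?thesis by (rule summable_on_cmult_right)
  qed
  have hi: "infsum (\<lambda>i. C * (if int N - M < \<bar>i\<bar> then g i else 0)) UNIV = C * infsum g (T N)" for N
  proof -
    have "infsum (\<lambda>i. if int N - M < \<bar>i\<bar> then g i else 0) UNIV = infsum g (T N)"
      by (rule infsum_cong_neutral) (auto simp: T_def)
    then show ?thesis by (simp add: infsum_cmult_right')
  qed
  have Es: "(\<lambda>i. (cmod (E N i))\<^sup>2) summable_on UNIV" for N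
  proof (rule summable_on_comparison_test[OF hs[of N]])
    show "(cmod (E N i))\<^sup>2 \<le> C * (if int N - M < \<bar>i\<bar> then g i else 0)" for i by (rule bound)
  qed simp
  have up: "infsum (\<lambda>i. (cmod (E N i))\<^sup>2) UNIV \<le> C * infsum g (T N)" for N
    unfolding hi[symmetric] by (rule infsum_mono[OF Es hs]) (rule bound)
  have lo: "0 \<le> infsum (\<lambda>i. (cmod (E N i))\<^sup>2) UNIV" for N
    by (simp add: infsum_nonneg)
  have "(\<lambda>N. C * infsum g (T N)) \<longlonglongrightarrow> C * 0"
    unfolding T_def by (intro tendsto_mult tendsto_const tail_to_zero gs g0)
  then have hl: "(\<lambda>N. C * infsum g (T N)) \<longlonglongrightarrow> 0" by simp
  have "(\<lambda>N. infsum (\<lambda>i. (cmod (E N i))\<^sup>2) UNIV) \<longlonglongrightarrow> 0"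
  proof (rule tendsto_sandwich[where f="\<lambda>N. 0" and h="\<lambda>N. C * infsum g (T N)"])
    show "\<forall>\<^sub>F N in sequentially. 0 \<le> infsum (\<lambda>i. (cmod (E N i))\<^sup>2) UNIV"
      by (intro always_eventually allI lo)
    show "\<forall>\<^sub>F N in sequentially. infsum (\<lambda>i. (cmod (E N i))\<^sup>2) UNIV \<le> C * infsum g (T N)"
      by (intro always_eventually allI up)
  qed (rule tendsto_const, rule hl)
  then have "(\<lambda>N. sqrt (infsum (\<lambda>i. (cmod (E N i))\<^sup>2) UNIV)) \<longlonglongrightarrow> sqrt 0"
    by (rule tendsto_real_sqrt)
  then show ?thesis unfolding l2norm_def E_def real_sqrt_zero .
qed


lemma col_ell2:
  assumes "bounded_op A" shows "ell2 (\<lambda>i. A i j)"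
proof -
  define e where "e = (\<lambda>l::int. if l = j then (1::complex) else 0)"
  have "fin_supp e" unfolding fin_supp_def e_def by simp
  then have "ell2 (mat_app A e)" using assms unfolding bounded_op_def by blast
  moreover have "mat_app A e = (\<lambda>i. A i j)"
    unfolding mat_app_def e_def by (intro ext, subst infsum_single[where a=j]) auto
  ultimately show ?thesis by simp
qed

lemma sum_list_map_nth: "sum_list (map f L) = (\<Sum>q\<in>{..<length L}. f (L ! q))"
  by (simp add: sum_list_sum_nth atLeast0LessThan)

theorem proposition3p16:
  fixes x1 :: "'g::{t2_space, ab_group_add}"
    and \<delta> :: "mat \<Rightarrow> mat" and b :: mat and x :: vec
  assumes "infinite_compact_abelian_group TYPE('g)"
    and "closure (range (\<lambda>n::int. zmult n x1)) = UNIV"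
    and "is_derivation x1 \<delta>"
    and "b \<in> algBB x1"
    and "fin_supp x"
  shows "(\<lambda>N::nat. l2norm ((\<Sum>n\<in>{- int N..int N}. mat_app (fourier_comp \<delta> n b) x)
                              - mat_app (\<delta> b) x)) \<longlonglongrightarrow> 0"
proof -
  note d = assms(3)
  obtain L where L: "\<forall>p\<in>set L. snd p \<in> algBB x1 \<and> hom (fst p) (snd p)" and bL: "b = msum L"
    using star_alg_dec[OF algBB_gens_hom[of x1], of b] assms(4) unfolding algBB_def by blast
  define P where "P = {..<length L}"
  define k where "k = (\<lambda>q. fst (L ! q))"
  define Dq where "Dq = (\<lambda>q. \<delta> (snd (L ! q)))"
  have Fe: "fourier_comp \<delta> n b i j = (\<Sum>q\<in>P. if n + k q = i - j then Dq q i j else 0)" for n i j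
    unfolding bL fourier_msum[OF d L] sum_list_map_nth P_def k_def Dq_def ..
  have inL: "\<forall>p\<in>set L. snd p \<in> algBB x1" using L by auto
  have De: "\<delta> b i j = (\<Sum>q\<in>P. Dq q i j)" for i j
  proof -
    have "\<delta> b = msum (map (\<lambda>p. (fst p, \<delta> (snd p))) L)"
      unfolding bL by (rule delta_msum[OF d inL])
    then show ?thesis unfolding msum_def P_def Dq_def by (simp add: sum_list_map_nth)
  qed
  have col: "\<forall>q\<in>P. \<forall>j. ell2 (\<lambda>i. Dq q i j)"
  proof (intro ballI allI)
    fix q j assume "q \<in> P"
    then have "snd (L ! q) \<in> algBB x1" using L unfolding P_def by auto
    then have "Dq q \<in> algB x1" using d unfolding is_derivation_def Dq_def by blast
    then have "bounded_op (Dq q)" unfolding algB_def cstar_alg_def by blast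
    then show "ell2 (\<lambda>i. Dq q i j)" by (rule col_ell2)
  qed
  show ?thesis
    by (rule analytic[of P x Dq "\<lambda>n. fourier_comp \<delta> n b" k "\<delta> b"])
       (use assms(5) col Fe De in \<open>auto simp: P_def\<close>)
qed

end
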